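(* Fix $a>0$. For $\beta>0$ let $f_\beta(x):=\frac14\big(a-e^{x/\beta}\big)$ and define $$\mathfrak{s}_\beta(x):=\int_{-1}^x\exp\Big(-2\int_0^u f_\beta(v)\,\mathrm{d}v\Big)\mathrm{d}u,\qquad \mathfrak{s}(x):=\int_{-1}^x\exp\Big(-2\int_0^u\frac a4\,\mathrm{d}v\Big)\mathrm{d}u.$$ Then for any $x_0<0$, $\mathfrak{s}_\beta'\to\mathfrak{s}'$ and $\mathfrak{s}_\beta\to\mathfrak{s}$ uniformly on $[x_0,0]$ as $\beta\to0$. Furthermore, $\mathfrak{s}_\beta(\beta^{1/6})\to\infty$ as $\beta\to 0$. *)

theory Defs
  imports "HOL-Analysis.Analysis"
begin

text \<open>Oriented one-dimensional integrals are written with the interval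
  Lebesgue integral LBINT x=a..b, which equals minus the integral over [b,a] when b < a.\<close>

definition f_beta :: "real \<Rightarrow> real \<Rightarrow> real \<Rightarrow> real" where
  "f_beta a \<beta> x = (a - exp (x / \<beta>)) / 4"

definition s_beta :: "real \<Rightarrow> real \<Rightarrow> real \<Rightarrow> real" where
  "s_beta a \<beta> x =
     (LBINT u=ereal (-1)..ereal x. exp (- 2 * (LBINT v=ereal 0..ereal u. f_beta a \<beta> v)))"

definition s_lim :: "real \<Rightarrow> real \<Rightarrow> real" where
  "s_lim a x =
     (LBINT u=ereal (-1)..ereal x. exp (- 2 * (LBINT v=ereal 0..ereal u. a / 4)))"

end

theory Submission
  imports Defs
begin

definition Gb :: "real \<Rightarrow> real \<Rightarrow> real \<Rightarrow> real" where
  "Gb a \<beta> u = exp (- 2 * ((a * u - \<beta>*(exp(u/\<beta>)-1))/4))"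

definition G0 :: "real \<Rightarrow> real \<Rightarrow> real" where
  "G0 a u = exp (- 2 * (a * u/4))"

lemma inner_beta:
  assumes "\<beta> > 0"
  shows "(LBINT v=ereal 0..ereal u. f_beta a \<beta> v) = (a * u - \<beta>*(exp(u/\<beta>)-1))/4"
proof -
  have "(LBINT v=ereal 0..ereal u. f_beta a \<beta> v) = (\<lambda>v. (a * v - \<beta>*exp(v/\<beta>))/4) u - (\<lambda>v. (a * v - \<beta>*exp(v/\<beta>))/4) 0"
  proof (rule interval_integral_FTC_finite)
    show "continuous_on {min 0 u..max 0 u} (f_beta a \<beta>)"
      unfolding f_beta_def using assms by (auto intro!: continuous_intros)
  next
    fix x
    have "((\<lambda>v. (a * v - \<beta>*exp(v/\<beta>))/4) has_real_derivative f_beta a \<beta> x) (at x)"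
      unfolding f_beta_def using assms
      by (auto intro!: derivative_eq_intros)
    then show "((\<lambda>v. (a * v - \<beta>*exp(v/\<beta>))/4) has_vector_derivative f_beta a \<beta> x) (at x within {min 0 u..max 0 u})"
      by (simp add: has_real_derivative_iff_has_vector_derivative has_vector_derivative_at_within)
  qed
  then show ?thesis by (simp add: algebra_simps diff_divide_distrib)
qed

lemma inner_lim:
  shows "(LBINT v=ereal 0..ereal u. a / 4) = a * u/4"
proof -
  have "(LBINT v=ereal 0..ereal u. a / 4) = (\<lambda>v. a * v/4) u - (\<lambda>v. a * v/4) 0"
  proof (rule interval_integral_FTC_finite)
    show "continuous_on {min 0 u..max 0 u} (\<lambda>v. a/4)"
      by (intro continuous_intros)
  next
    fix x
    have "((\<lambda>v. a * v/4) has_real_derivative a/4) (at x)"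
      by (auto intro!: derivative_eq_intros)
    then show "((\<lambda>v. a * v/4) has_vector_derivative a/4) (at x within {min 0 u..max 0 u})"
      by (simp add: has_real_derivative_iff_has_vector_derivative has_vector_derivative_at_within)
  qed
  then show ?thesis by simp
qed

lemma FTC_at:
  fixes G :: "real \<Rightarrow> real"
  assumes "continuous_on UNIV G"
  shows "((\<lambda>x. LBINT u=ereal c..ereal x. G u) has_real_derivative G x) (at x)"
proof -
  let ?a = "min c x - 1" and ?b = "max c x + 1"
  have "((\<lambda>x. LBINT u=ereal c..ereal x. G u) has_vector_derivative G x) (at x within {?a..?b})"
    by (rule interval_integral_FTC2) (auto intro: continuous_on_subset[OF assms])
  moreover have "at x within {?a..?b} = at x"
    by (rule at_within_Icc_at) auto
  ultimately show ?thesis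
    by (simp add: has_real_derivative_iff_has_vector_derivative)
qed

lemma s_beta_eq: "\<beta> > 0 \<Longrightarrow> s_beta a \<beta> x = (LBINT u=ereal (-1)..ereal x. Gb a \<beta> u)"
  unfolding s_beta_def Gb_def by (simp add: inner_beta)

lemma s_lim_eq: "s_lim a x = (LBINT u=ereal (-1)..ereal x. G0 a u)"
  unfolding s_lim_def G0_def by (simp add: inner_lim)

lemma s_beta_deriv: "\<beta> > 0 \<Longrightarrow> (s_beta a \<beta> has_real_derivative Gb a \<beta> x) (at x)"
proof -
  assume b: "\<beta> > 0"
  have "s_beta a \<beta> = (\<lambda>x. LBINT u=ereal (-1)..ereal x. Gb a \<beta> u)"
    using s_beta_eq[OF b] by auto
  moreover have "continuous_on UNIV (Gb a \<beta>)"
    unfolding Gb_def using b by (auto intro!: continuous_intros)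
  ultimately show ?thesis using FTC_at by metis
qed

lemma s_lim_deriv: "(s_lim a has_real_derivative G0 a x) (at x)"
proof -
  have "s_lim a = (\<lambda>x. LBINT u=ereal (-1)..ereal x. G0 a u)"
    using s_lim_eq by auto
  moreover have "continuous_on UNIV (G0 a)"
    unfolding G0_def by (auto intro!: continuous_intros)
  ultimately show ?thesis using FTC_at by metis
qed

lemma s_beta_m1: "\<beta> > 0 \<Longrightarrow> s_beta a \<beta> (-1) = 0"
  by (simp add: s_beta_eq)

lemma s_lim_m1: "s_lim a (-1) = 0"
  by (simp add: s_lim_eq)


lemma unif_from_bound:
  fixes f :: "real \<Rightarrow> real \<Rightarrow> real"
  assumes C: "C \<ge> 0"
    and bnd: "\<And>\<beta> x. 0 < \<beta> \<Longrightarrow> \<beta> < 1 \<Longrightarrow> x \<in> S \<Longrightarrow> \<bar>f \<beta> x - l x\<bar> \<le> C * \<beta>"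
  shows "uniform_limit S f l (at_right 0)"
proof (rule uniform_limitI)
  fix e :: real assume e: "e > 0"
  show "\<forall>\<^sub>F n in at_right 0. \<forall>x\<in>S. dist (f n x) (l x) < e"
    unfolding eventually_at_right_field
  proof (intro exI[of _ "min 1 (e/(C+1))"] conjI allI impI ballI)
    show "min 1 (e/(C+1)) > 0" using e C by auto
    fix y x assume y: "y > 0" "y < min 1 (e/(C+1))" and x: "x \<in> S"
    have "\<bar>f y x - l x\<bar> \<le> C * y" using bnd[OF y(1) _ x] y by auto
    also have "C * y \<le> C * (e/(C+1))" using y C by (intro mult_left_mono) auto
    also have "\<dots> < e" using e C by (simp add: field_simps)
    finally show "dist (f y x) (l x) < e" by (simp add: dist_real_def)
  qed
qed

lemma G_diff_bound:
  assumes a: "a > 0" and b: "\<beta> > 0" and mu: "m \<le> u" and u0: "u \<le> 0"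
  shows "\<bar>Gb a \<beta> u - G0 a u\<bar> \<le> exp (-a * m / 2) / 2 * \<beta>"
proof -
  define h where "h = \<beta> * (exp (u/\<beta>) - 1) / 2"
  have e: "Gb a \<beta> u = G0 a u * exp h"
    unfolding Gb_def G0_def h_def by (simp add: exp_add[symmetric] field_simps)
  have "exp (u/\<beta>) \<le> 1" using u0 b by (simp add: divide_nonpos_pos)
  then have h0: "h \<le> 0" unfolding h_def using b by (simp add: mult_nonneg_nonpos)
  have h1: "-h \<le> \<beta>/2" unfolding h_def using b by (simp add: field_simps)
  have x1: "1 + h \<le> exp h" by (rule exp_ge_add_one_self)
  have "exp h \<le> 1" using h0 by simp
  then have "\<bar>exp h - 1\<bar> = 1 - exp h" by simp
  then have d: "\<bar>exp h - 1\<bar> \<le> \<beta>/2" using h0 h1 x1 by linarith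
  have g: "G0 a u \<le> exp (-a * m / 2)" unfolding G0_def using a mu by (simp add: mult_left_mono)
  have "Gb a \<beta> u - G0 a u = G0 a u * (exp h - 1)"
    by (simp add: e algebra_simps)
  then have "\<bar>Gb a \<beta> u - G0 a u\<bar> = G0 a u * \<bar>exp h - 1\<bar>"
    by (simp add: abs_mult G0_def)
  also have "\<dots> \<le> exp (-a * m / 2) * (\<beta>/2)"
    using d g by (intro mult_mono) (auto simp: G0_def)
  finally show ?thesis by simp
qed


lemma part2_bound:
  assumes a: "a > 0" and b: "\<beta> > 0" and x0: "x0 < 0" and x: "x0 \<le> x" "x \<le> 0"
  shows "\<bar>s_beta a \<beta> x - s_lim a x\<bar> \<le> ((1 - x0) * (exp (-a * min (-1) x0 / 2) / 2)) * \<beta>"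
proof -
  define K where "K = exp (-a * min (-1) x0 / 2) / 2"
  define D where "D = (\<lambda>x. s_beta a \<beta> x - s_lim a x)"
  have der: "DERIV D y :> (Gb a \<beta> y - G0 a y)" for y
    unfolding D_def using s_beta_deriv[OF b] s_lim_deriv by (intro derivative_intros) auto
  have D1: "D (-1) = 0" unfolding D_def using s_beta_m1[OF b] s_lim_m1 by simp
  have Kb: "\<bar>Gb a \<beta> z - G0 a z\<bar> \<le> K * \<beta>" if "min (-1) x0 \<le> z" "z \<le> 0" for z
    using G_diff_bound[OF a b that] unfolding K_def by simp
  have K0: "K \<ge> 0" unfolding K_def by simp
  consider "x = -1" | "x < -1" | "x > -1" by linarith
  then have "\<bar>D x\<bar> \<le> (1 - x0) * K * \<beta>"
  proof cases
    case 1 then show ?thesis using D1 K0 b x0 by simp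
  next
    case 2
    obtain z where z: "x < z" "z < -1" "D (-1) - D x = (-1 - x) * (Gb a \<beta> z - G0 a z)"
      using MVT2[OF 2, of D "\<lambda>y. Gb a \<beta> y - G0 a y"] der by blast
    have "D x = - ((-1 - x) * (Gb a \<beta> z - G0 a z))" using z D1 by simp
    then have "\<bar>D x\<bar> = \<bar>-1 - x\<bar> * \<bar>Gb a \<beta> z - G0 a z\<bar>" by (simp only: abs_minus abs_mult)
    then have "\<bar>D x\<bar> = (-1 - x) * \<bar>Gb a \<beta> z - G0 a z\<bar>" using 2 by simp
    also have "\<dots> \<le> (1 - x0) * (K * \<beta>)"
      using Kb[of z] z x 2 by (intro mult_mono) auto
    finally show ?thesis by simp
  next
    case 3
    obtain z where z: "-1 < z" "z < x" "D x - D (-1) = (x + 1) * (Gb a \<beta> z - G0 a z)"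
      using MVT2[OF 3, of D "\<lambda>y. Gb a \<beta> y - G0 a y"] der by fastforce
    have "\<bar>D x\<bar> = (x + 1) * \<bar>Gb a \<beta> z - G0 a z\<bar>"
      using z 3 D1 by (simp add: abs_mult)
    also have "\<dots> \<le> (1 - x0) * (K * \<beta>)"
      using Kb[of z] z x 3 x0 by (intro mult_mono) auto
    finally show ?thesis by simp
  qed
  then show ?thesis unfolding D_def K_def by simp
qed

lemma exp_sq_bound: "y \<ge> 0 \<Longrightarrow> 1 + y^2/4 \<le> exp (y::real)"
proof -
  assume y: "y \<ge> 0"
  have "1 + y/2 \<le> exp (y/2)" by (rule exp_ge_add_one_self)
  then have "(1 + y/2)^2 \<le> exp (y/2)^2" using y by (intro power_mono) auto
  also have "exp (y/2)^2 = exp y" by (simp add: power2_eq_square exp_add[symmetric])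
  finally show ?thesis using y by (simp add: power2_eq_square field_simps)
qed

lemma part3_bound:
  assumes a: "a > 0" and b: "\<beta> > 0" "\<beta> < 1"
  shows "exp (-a/2) / 64 / sqrt \<beta> \<le> s_beta a \<beta> (\<beta> powr (1/6))"
proof -
  define t where "t = \<beta> powr (1/6)"
  have t0: "t > 0" unfolding t_def using b by simp
  have t1: "t < 1" unfolding t_def using b powr_less_mono2[of "1/6" \<beta> 1] by simp
  have der: "DERIV (s_beta a \<beta>) y :> Gb a \<beta> y" for y using s_beta_deriv[OF b(1)] .
  obtain z1 where z1: "-1 < z1" "z1 < t/2" "s_beta a \<beta> (t/2) - s_beta a \<beta> (-1) = (t/2 + 1) * Gb a \<beta> z1"
    using MVT2[of "-1" "t/2" "s_beta a \<beta>" "Gb a \<beta>"] der t0 by fastforce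
  have "Gb a \<beta> z1 > 0" unfolding Gb_def by simp
  then have s2: "s_beta a \<beta> (t/2) \<ge> 0" using z1 s_beta_m1[OF b(1)] t0 by simp
  obtain z where z: "t/2 < z" "z < t" "s_beta a \<beta> t - s_beta a \<beta> (t/2) = (t - t/2) * Gb a \<beta> z"
    using MVT2[of "t/2" t "s_beta a \<beta>" "Gb a \<beta>"] der t0 by fastforce
  define h where "h = \<beta> * (exp (z/\<beta>) - 1) / 2"
  have e: "Gb a \<beta> z = exp (-a * z/2) * exp h"
    unfolding Gb_def h_def by (simp add: exp_add[symmetric] field_simps)
  have e1: "exp (-a/2) \<le> exp (-a * z/2)" using a z t1 by simp
  have "1 + (z/\<beta>)^2/4 \<le> exp (z/\<beta>)" using z t0 b by (intro exp_sq_bound) simp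
  then have "\<beta> * ((z/\<beta>)^2/4) \<le> \<beta> * (exp (z/\<beta>) - 1)" using b by (intro mult_left_mono) auto
  then have "z^2 / (8*\<beta>) \<le> h" unfolding h_def using b by (simp add: power2_eq_square field_simps)
  moreover have "(t/2)^2 \<le> z^2" using z t0 by (intro power_mono) auto
  then have "(t/2)^2 / (8*\<beta>) \<le> z^2 / (8*\<beta>)" using b by (intro divide_right_mono) auto
  moreover have "(t/2)^2 / (8*\<beta>) = t^2 / (32*\<beta>)" by (simp add: power2_eq_square)
  ultimately have "t^2 / (32*\<beta>) \<le> h" using \<open>z^2 / (8*\<beta>) \<le> h\<close> by linarith
  also have "h \<le> exp h" using exp_ge_add_one_self[of h] by linarith
  finally have hh: "t^2 / (32*\<beta>) \<le> exp h" .
  have "exp (-a/2) * (t^2 / (32*\<beta>)) \<le> Gb a \<beta> z"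
    unfolding e using e1 hh b by (intro mult_mono) auto
  then have "(t/2) * (exp (-a/2) * (t^2 / (32*\<beta>))) \<le> (t/2) * Gb a \<beta> z"
    using t0 by (intro mult_left_mono) auto
  moreover have "(t/2) * Gb a \<beta> z \<le> s_beta a \<beta> t"
    using z(3) s2 by (simp add: field_simps)
  ultimately have L: "(t/2) * (exp (-a/2) * (t^2 / (32*\<beta>))) \<le> s_beta a \<beta> t"
    by linarith
  have eq1: "(t/2) * (exp (-a/2) * (t^2 / (32*\<beta>))) = exp (-a/2) / 64 * (t^3 / \<beta>)"
    by (simp add: power2_eq_square power3_eq_cube field_simps)
  have t3: "t^3 = sqrt \<beta>" unfolding t_def using b
    by (simp add: powr_power powr_half_sqrt[symmetric])
  have eq2: "t^3 / \<beta> = 1 / sqrt \<beta>"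
  proof -
    have bb: "\<beta> = sqrt \<beta> * sqrt \<beta>" using b by simp
    have "sqrt \<beta> > 0" using b by simp
    then show ?thesis unfolding t3 by (subst (2) bb) (simp add: field_simps)
  qed
  have "exp (-a/2) / 64 / sqrt \<beta> = (t/2) * (exp (-a/2) * (t^2 / (32*\<beta>)))"
    unfolding eq1 eq2 by simp
  then show ?thesis using L unfolding t_def by simp
qed

lemma part3_lim:
  fixes c :: real
  assumes c: "c > 0"
  shows "filterlim (\<lambda>\<beta>. c / sqrt \<beta>) at_top (at_right 0)"
proof (subst filterlim_at_top_gt[where c=0], intro allI impI)
  fix Z :: real assume Z: "Z > 0"
  show "eventually (\<lambda>\<beta>. Z \<le> c / sqrt \<beta>) (at_right 0)"
    unfolding eventually_at_right_field
  proof (intro exI[of _ "(c/Z)^2"] conjI allI impI)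
    show "(c/Z)^2 > 0" using c Z by simp
    fix y :: real assume y: "y > 0" "y < (c/Z)^2"
    have "sqrt y < c/Z" using y c Z real_sqrt_less_mono[OF y(2)] by simp
    then have "sqrt y * Z < c" using Z by (simp add: field_simps)
    then show "Z \<le> c / sqrt y" using y by (simp add: field_simps)
  qed
qed

theorem lemma5p2:
  fixes a x0 :: real
  assumes "a > 0" and "x0 < 0"
  shows "uniform_limit {x0..0} (\<lambda>\<beta>. deriv (s_beta a \<beta>)) (deriv (s_lim a)) (at_right 0)
     \<and> uniform_limit {x0..0} (\<lambda>\<beta>. s_beta a \<beta>) (s_lim a) (at_right 0)
     \<and> filterlim (\<lambda>\<beta>. s_beta a \<beta> (\<beta> powr (1/6))) at_top (at_right 0)"
proof (intro conjI)
  show "uniform_limit {x0..0} (\<lambda>\<beta>. deriv (s_beta a \<beta>)) (deriv (s_lim a)) (at_right 0)"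
  proof (rule unif_from_bound[where C = "exp (-a * min (-1) x0 / 2) / 2"])
    fix \<beta> x :: real assume b: "0 < \<beta>" "\<beta> < 1" and x: "x \<in> {x0..0}"
    have "deriv (s_beta a \<beta>) x = Gb a \<beta> x" using s_beta_deriv[OF b(1)] by (rule DERIV_imp_deriv)
    moreover have "deriv (s_lim a) x = G0 a x" using s_lim_deriv by (rule DERIV_imp_deriv)
    ultimately show "\<bar>deriv (s_beta a \<beta>) x - deriv (s_lim a) x\<bar> \<le> exp (-a * min (-1) x0 / 2) / 2 * \<beta>"
      using G_diff_bound[OF assms(1) b(1), of "min (-1) x0" x] x by auto
  qed simp
  show "uniform_limit {x0..0} (\<lambda>\<beta>. s_beta a \<beta>) (s_lim a) (at_right 0)"
  proof (rule unif_from_bound[where C = "(1 - x0) * (exp (-a * min (-1) x0 / 2) / 2)"])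
    fix \<beta> x :: real assume b: "0 < \<beta>" "\<beta> < 1" and x: "x \<in> {x0..0}"
    show "\<bar>s_beta a \<beta> x - s_lim a x\<bar> \<le> (1 - x0) * (exp (-a * min (-1) x0 / 2) / 2) * \<beta>"
      using part2_bound[OF assms(1) b(1) assms(2)] x by auto
  qed (use assms in simp)
  show "filterlim (\<lambda>\<beta>. s_beta a \<beta> (\<beta> powr (1/6))) at_top (at_right 0)"
  proof (rule filterlim_at_top_mono[OF part3_lim[of "exp (-a/2) / 64"]])
    show "eventually (\<lambda>\<beta>. exp (-a/2) / 64 / sqrt \<beta> \<le> s_beta a \<beta> (\<beta> powr (1/6))) (at_right 0)"
      unfolding eventually_at_right_field
      using part3_bound[OF assms(1)] by (intro exI[of _ 1]) auto
  qed simp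
qed

end
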